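(* Let $k_{ON},k_{OFF},k_I,\alpha_{p_1},\alpha_{p_2},\gamma_{p_1},\gamma_{m_2},\alpha_{m_2,I},\beta_{m_2,A},T_c>0$, $v_b>1$, $n\ge 1$, and set $a_1=k_{ON}$, $a_3=k_{ON}+k_{OFF}$, $a_4=k_I$, $a_5=\alpha_{p_1}$, $a_6=\gamma_{p_1}$, $a_7=\alpha_{m_2,I}$, $a_8=\gamma_{m_2}+\alpha_{p_1}+\alpha_{p_2}$, $a_9=\beta_{m_2,A}/v_b$, $a_{10}=v_b/T_c^n$, $a_{11}=1/T_c^n$. Consider solutions $(x,y,s,v)$ of \[ \begin{aligned} x' &= a_1 + (a_4-a_1)y - \Big(a_3 + a_9\frac{1+a_{10}v^n}{1+a_{11}v^n}\Big)x,\\ y' &= a_9\frac{1+a_{10}v^n}{1+a_{11}v^n}x - a_4 y,\\ s' &= a_7x - a_8 s,\\ v' &= a_5 s - a_6 v, \end{aligned} \] with nonnegative initial conditions and $x(0)+y(0)\le 1$. Then there exist positive constants $m_x,m_y$ such that $0<m_x\le \liminf_{t\to\infty}x(t)$ and $0<m_y\le\liminf_{t\to\infty}y(t)$.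
   Context: Here $x=\mathrm{LTR}_I$, $y=\mathrm{LTR}_A$, $s=\mathrm{env}_I$, $v=\mathrm{Tat}$ in a model of HIV-1 transcription in which LTR proportions are conserved, $\mathrm{LTR}_R=1-x-y\ge 0$, so that $x,y\in[0,1]$. *)

theory Defs
  imports "HOL-Analysis.Analysis"
begin

definition hill :: "real \<Rightarrow> real \<Rightarrow> real \<Rightarrow> real \<Rightarrow> real" where
  "hill a10 a11 n v = (1 + a10 * v powr n) / (1 + a11 * v powr n)"

end

theory Submission
  imports Defs
begin

lemma barrier:
  fixes f :: "'i \<Rightarrow> real \<Rightarrow> real" and I :: "'i set"
  assumes fin: "finite I"
    and cont: "\<And>i. i \<in> I \<Longrightarrow> continuous_on {0..} (f i)"
    and pos0: "\<And>i. i \<in> I \<Longrightarrow> f i 0 > 0"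
    and der: "\<And>i t. i \<in> I \<Longrightarrow> t > 0 \<Longrightarrow> (\<forall>j\<in>I. f j t \<ge> 0) \<Longrightarrow> f i t = 0 \<Longrightarrow>
              \<exists>D>0. (f i has_real_derivative D) (at t)"
  shows "\<forall>t\<ge>0. \<forall>i\<in>I. f i t > 0"
proof (rule ccontr)
  assume neg: "\<not> (\<forall>t\<ge>0. \<forall>i\<in>I. f i t > 0)"
  define S where "S = (\<Union>i\<in>I. {0..} \<inter> f i -` {..0})"
  have Sne: "S \<noteq> {}" using neg unfolding S_def by (auto simp: not_less)
  have Scl: "closed S" unfolding S_def
    by (intro closed_UN fin ballI continuous_closed_preimage cont) auto
  have Sbdd: "bdd_below S" unfolding S_def by (auto intro!: bdd_belowI[of _ 0])
  define t1 where "t1 = Inf S"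
  have t1S: "t1 \<in> S" using closed_contains_Inf[OF Sne Sbdd Scl] t1_def by simp
  have lower: "\<And>t. t \<in> S \<Longrightarrow> t1 \<le> t" unfolding t1_def using Sbdd by (simp add: cInf_lower)
  from t1S obtain i where i: "i \<in> I" "t1 \<ge> 0" "f i t1 \<le> 0" unfolding S_def by auto
  have "t1 \<noteq> 0" using pos0[OF i(1)] i by auto
  hence t1p: "t1 > 0" using i by auto
  have before: "\<And>t j. j \<in> I \<Longrightarrow> 0 \<le> t \<Longrightarrow> t < t1 \<Longrightarrow> f j t > 0"
  proof (rule ccontr)
    fix t j assume "j \<in> I" "0 \<le> t" "t < t1" "\<not> f j t > 0"
    hence "t \<in> {0..} \<inter> f j -` {..0}" by (simp add: not_less)
    hence "t \<in> S" unfolding S_def using \<open>j \<in> I\<close> by blast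
    with lower[of t] \<open>t < t1\<close> show False by auto
  qed
  have nonneg: "\<forall>j\<in>I. f j t1 \<ge> 0"
  proof
    fix j assume j: "j \<in> I"
    show "f j t1 \<ge> 0"
    proof (rule ccontr)
      assume "\<not> f j t1 \<ge> 0"
      moreover have "continuous_on {0..t1} (f j)" using cont[OF j] by (rule continuous_on_subset) auto
      ultimately obtain t where t: "0 \<le> t" "t \<le> t1" "f j t = 0"
      proof -
        have "f j t1 \<le> 0" "0 \<le> f j 0" "0 \<le> t1" using \<open>\<not> f j t1 \<ge> 0\<close> pos0[OF j] t1p by auto
        from IVT2'[OF this \<open>continuous_on {0..t1} (f j)\<close>] show thesis using that by blast
      qed
      have "t \<noteq> t1" using t(3) \<open>\<not> f j t1 \<ge> 0\<close> by auto
      hence "t < t1" using t(2) by simp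
      with before[OF j t(1)] t(3) show False by simp
    qed
  qed
  hence fz: "f i t1 = 0" using i by (meson antisym)
  obtain D where D: "D > 0" "(f i has_real_derivative D) (at t1)" using der[OF i(1) t1p nonneg fz] by blast
  obtain d where d: "d > 0" "\<forall>h>0. h < d \<longrightarrow> f i (t1 - h) < f i t1"
    using DERIV_pos_inc_left[OF D(2) D(1)] by blast
  define h where "h = min (d/2) t1"
  have "h > 0" "h < d" "h \<le> t1" using d t1p unfolding h_def by auto
  hence "f i (t1 - h) < 0" using d fz by auto
  moreover have "f i (t1 - h) > 0" using before[OF i(1), of "t1 - h"] \<open>h > 0\<close> \<open>h \<le> t1\<close> by auto
  ultimately show False by simp
qed

lemma lowerbd:
  fixes f f' :: "real \<Rightarrow> real"
  assumes B: "B > 0" and A: "A > 0" and T: "T \<ge> 0"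
    and d: "\<And>t. t \<ge> T \<Longrightarrow> (f has_real_derivative f' t) (at t within {0..})"
    and ineq: "\<And>t. t \<ge> T \<Longrightarrow> f' t \<ge> A - B * f t"
  shows "eventually (\<lambda>t. f t \<ge> A / (2*B)) at_top"
proof -
  define g where "g t = (f t - A/B) * exp (B * (t - T))" for t
  have dat: "(f has_real_derivative f' t) (at t)" if "t > T" for t
  proof -
    have "t \<in> interior {0..}" using that T by simp
    thus ?thesis using d[of t] that at_within_interior[of t "{0::real..}"] by simp
  qed
  have mono: "g T \<le> g t" if "t \<ge> T" for t
  proof (rule DERIV_nonneg_imp_increasing_open[OF that])
    fix u assume u: "T < u" "u < t"
    have "(g has_real_derivative (f' u * exp (B*(u-T)) + (f u - A/B) * (exp (B*(u-T)) * B))) (at u)"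
      unfolding g_def by (auto intro!: derivative_eq_intros dat u)
    moreover have "f' u * exp (B*(u-T)) + (f u - A/B) * (exp (B*(u-T)) * B)
        = (f' u - (A - B * f u)) * exp (B*(u-T))" using B by (simp add: field_simps)
    moreover have "(f' u - (A - B * f u)) * exp (B*(u-T)) \<ge> 0" using ineq[of u] u by simp
    ultimately show "\<exists>y. (g has_real_derivative y) (at u) \<and> 0 \<le> y" by metis
  next
    have "continuous_on {T..t} f"
      by (rule DERIV_continuous_on[where D=f']) (rule has_field_derivative_subset[OF d], use T in auto)
    thus "continuous_on {T..t} g" unfolding g_def by (intro continuous_intros)
  qed
  have fb: "f t \<ge> A/B + (f T - A/B) * exp (- B * (t - T))" if "t \<ge> T" for t
  proof -
    have "(f T - A/B) \<le> (f t - A/B) * exp (B*(t-T))" using mono[OF that] by (simp add: g_def)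
    hence "(f T - A/B) * exp (- B*(t-T)) \<le> (f t - A/B) * exp (B*(t-T)) * exp (- B*(t-T))"
      by (simp add: mult_right_mono)
    also have "\<dots> = f t - A/B" by (simp add: mult.assoc flip: exp_add)
    finally show ?thesis by simp
  qed
  have lim: "((\<lambda>t. A/B + (f T - A/B) * exp (- B * (t - T))) \<longlongrightarrow> A/B) at_top"
  proof -
    have "filterlim (\<lambda>t. - B * (t - T)) at_bot at_top"
      unfolding filterlim_at_bot eventually_at_top_linorder
    proof (intro allI exI allI impI)
      fix Z t assume t: "t \<ge> T + \<bar>Z\<bar>/B"
      hence "B * (t - T) \<ge> B * (\<bar>Z\<bar>/B)" using B by (intro mult_left_mono) auto
      thus "- B * (t - T) \<le> Z" using B by auto
    qed
    hence "((\<lambda>t. exp (- B * (t - T))) \<longlongrightarrow> 0) at_top"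
      by (rule filterlim_compose[OF exp_at_bot])
    hence "((\<lambda>t. A/B + (f T - A/B) * exp (- B * (t - T))) \<longlongrightarrow> A/B + (f T - A/B) * 0) at_top"
      by (intro tendsto_intros)
    thus ?thesis by simp
  qed
  have "A/(2*B) < A/B" using A B by (simp add: field_simps)
  from order_tendstoD(1)[OF lim this]
  have "eventually (\<lambda>t. A/(2*B) < A/B + (f T - A/B) * exp (- B * (t - T))) at_top" .
  moreover have "eventually (\<lambda>t. t \<ge> T) at_top" by simp
  ultimately show ?thesis
  proof eventually_elim
    case (elim t) thus ?case using fb[of t] by linarith
  qed
qed
lemma barrier3:
  fixes f g h :: "real \<Rightarrow> real"
  assumes c: "continuous_on {0..} f" "continuous_on {0..} g" "continuous_on {0..} h"
    and p: "f 0 > 0" "g 0 > 0" "h 0 > 0"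
    and df: "\<And>t. t > 0 \<Longrightarrow> f t = 0 \<Longrightarrow> g t \<ge> 0 \<Longrightarrow> h t \<ge> 0 \<Longrightarrow> \<exists>D>0. (f has_real_derivative D) (at t)"
    and dg: "\<And>t. t > 0 \<Longrightarrow> g t = 0 \<Longrightarrow> f t \<ge> 0 \<Longrightarrow> h t \<ge> 0 \<Longrightarrow> \<exists>D>0. (g has_real_derivative D) (at t)"
    and dh: "\<And>t. t > 0 \<Longrightarrow> h t = 0 \<Longrightarrow> f t \<ge> 0 \<Longrightarrow> g t \<ge> 0 \<Longrightarrow> \<exists>D>0. (h has_real_derivative D) (at t)"
  shows "\<forall>t\<ge>0. f t > 0 \<and> g t > 0 \<and> h t > 0"
proof -
  define F where "F i = (if i = (0::nat) then f else if i = 1 then g else h)" for i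
  have "\<forall>t\<ge>0. \<forall>i\<in>{0,1,2}. F i t > 0"
  proof (rule barrier)
    fix i assume "i \<in> {0,1,2::nat}"
    thus "continuous_on {0..} (F i)" "F i 0 > 0" using c p by (auto simp: F_def)
  next
    fix i t assume i: "i \<in> {0,1,2::nat}" and t: "t > 0" and all: "\<forall>j\<in>{0,1,2}. F j t \<ge> 0" and z: "F i t = 0"
    have "f t \<ge> 0" "g t \<ge> 0" "h t \<ge> 0" using all by (auto simp: F_def dest: bspec[of _ _ 0] bspec[of _ _ 1] bspec[of _ _ 2])
    thus "\<exists>D>0. (F i has_real_derivative D) (at t)"
      using i z df[OF t] dg[OF t] dh[OF t] by (auto simp: F_def)
  qed simp
  thus ?thesis by (auto simp: F_def dest: bspec[of _ _ 0] bspec[of _ _ 1] bspec[of _ _ 2])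
qed

theorem proposition3p1:
  fixes kON kOFF kI alpha_p1 alpha_p2 gamma_p1 gamma_m2 alpha_m2I beta_m2A Tc vb n :: real
    and x y s v :: "real \<Rightarrow> real"
  assumes pos: "kON > 0" "kOFF > 0" "kI > 0" "alpha_p1 > 0" "alpha_p2 > 0" "gamma_p1 > 0"
      "gamma_m2 > 0" "alpha_m2I > 0" "beta_m2A > 0" "Tc > 0"
    and vb: "vb > 1" and n: "n \<ge> 1"
    and dx: "\<And>t. t \<ge> 0 \<Longrightarrow> (x has_real_derivative
        (kON + (kI - kON) * y t
         - ((kON + kOFF) + (beta_m2A / vb) * hill (vb / Tc powr n) (1 / Tc powr n) n (v t)) * x t))
        (at t within {0..})"
    and dy: "\<And>t. t \<ge> 0 \<Longrightarrow> (y has_real_derivative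
        ((beta_m2A / vb) * hill (vb / Tc powr n) (1 / Tc powr n) n (v t) * x t - kI * y t))
        (at t within {0..})"
    and ds: "\<And>t. t \<ge> 0 \<Longrightarrow> (s has_real_derivative
        (alpha_m2I * x t - (gamma_m2 + alpha_p1 + alpha_p2) * s t)) (at t within {0..})"
    and dv: "\<And>t. t \<ge> 0 \<Longrightarrow> (v has_real_derivative
        (alpha_p1 * s t - gamma_p1 * v t)) (at t within {0..})"
    and init: "x 0 \<ge> 0" "y 0 \<ge> 0" "s 0 \<ge> 0" "v 0 \<ge> 0" "x 0 + y 0 \<le> 1"
  shows "\<exists>mx my. 0 < mx \<and> 0 < my
           \<and> ereal mx \<le> Liminf at_top (\<lambda>t. ereal (x t))
           \<and> ereal my \<le> Liminf at_top (\<lambda>t. ereal (y t))"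
proof -
  define C where "C t = beta_m2A / vb * hill (vb / Tc powr n) (1 / Tc powr n) n (v t)" for t
  define r where "r t = 1 - x t - y t" for t
  define cmin where "cmin = beta_m2A / vb"
  have cmin: "cmin > 0" using pos vb unfolding cmin_def by simp
  have Cb: "cmin \<le> C t \<and> C t \<le> beta_m2A" for t
  proof -
    define P where "P = Tc powr n"
    define w where "w = v t powr n"
    have P: "P > 0" using pos unfolding P_def by simp
    have w: "w \<ge> 0" unfolding w_def by simp
    have hdef: "hill (vb / Tc powr n) (1 / Tc powr n) n (v t) = (P + vb * w) / (P + w)"
      unfolding hill_def P_def[symmetric] w_def[symmetric] using P
      apply (simp add: field_simps)
      apply (subst distrib_left[symmetric])+
      by simp
    have den: "P + w > 0" using P w by simp
    have "vb * w \<ge> w" using mult_right_mono[of 1 vb w] vb w by simp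
    hence h1: "(P + vb * w) / (P + w) \<ge> 1" using den by simp
    have "P + vb * w \<le> vb * (P + w)" using vb P by (simp add: algebra_simps)
    hence h2: "(P + vb * w) / (P + w) \<le> vb" using den by (simp add: divide_le_eq)
    have "beta_m2A / vb * 1 \<le> beta_m2A / vb * ((P + vb * w) / (P + w))"
      using h1 pos vb by (intro mult_left_mono) auto
    moreover have "beta_m2A / vb * ((P + vb * w) / (P + w)) \<le> beta_m2A / vb * vb"
      using h2 pos vb by (intro mult_left_mono) auto
    ultimately show ?thesis using vb unfolding C_def hdef cmin_def by simp
  qed
  have dx': "(x has_real_derivative (kON * r t + kI * y t - (kOFF + C t) * x t)) (at t within {0..})"
    if "t \<ge> 0" for t
    by (rule DERIV_cong[OF dx[OF that]]) (simp add: C_def r_def algebra_simps)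
  have dy': "(y has_real_derivative (C t * x t - kI * y t)) (at t within {0..})"
    if "t \<ge> 0" for t
    by (rule DERIV_cong[OF dy[OF that]]) (simp add: C_def)
  have dr': "(r has_real_derivative (kOFF * x t - kON * r t)) (at t within {0..})"
    if "t \<ge> 0" for t
  proof -
    have "((\<lambda>t. 1 - x t - y t) has_real_derivative
       (0 - (kON * r t + kI * y t - (kOFF + C t) * x t) - (C t * x t - kI * y t))) (at t within {0..})"
      by (intro derivative_intros dx' dy' that)
    thus ?thesis unfolding r_def[abs_def] by (rule DERIV_cong) (simp add: r_def algebra_simps)
  qed
  have atI: "at t within {0..} = at t" if "t > 0" for t :: real
    using that by (intro at_within_interior) simp
  have cx: "continuous_on {0..} x" by (rule DERIV_continuous_on[OF dx']) simp
  have cy: "continuous_on {0..} y" by (rule DERIV_continuous_on[OF dy']) simp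
  have cr: "continuous_on {0..} r" by (rule DERIV_continuous_on[OF dr']) simp
  define L where "L = kON + kI + kOFF + beta_m2A + 1"
  have Lp: "L > 0" using pos unfolding L_def by simp
  have r0: "r 0 \<ge> 0" using init unfolding r_def by simp
  have epsinv: "x t + e * exp (L * t) > 0 \<and> y t + e * exp (L * t) > 0 \<and> r t + e * exp (L * t) > 0"
    if e: "e > 0" and t: "t \<ge> 0" for e t
  proof -
    have "\<forall>t\<ge>0. x t + e * exp (L * t) > 0 \<and> y t + e * exp (L * t) > 0 \<and> r t + e * exp (L * t) > 0"
    proof (rule barrier3)
      show "continuous_on {0..} (\<lambda>t. x t + e * exp (L * t))"
           "continuous_on {0..} (\<lambda>t. y t + e * exp (L * t))"
           "continuous_on {0..} (\<lambda>t. r t + e * exp (L * t))"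
        by (intro continuous_intros cx cy cr)+
      show "x 0 + e * exp (L * 0) > 0" "y 0 + e * exp (L * 0) > 0" "r 0 + e * exp (L * 0) > 0"
        using init r0 e by auto
    next
      fix t :: real assume t: "t > 0" and z: "x t + e * exp (L * t) = 0"
        and o1: "y t + e * exp (L * t) \<ge> 0" and o2: "r t + e * exp (L * t) \<ge> 0"
      define d where "d = e * exp (L * t)"
      have d: "d > 0" using e unfolding d_def by simp
      have "((\<lambda>t. x t + e * exp (L * t)) has_real_derivative
          (kON * r t + kI * y t - (kOFF + C t) * x t) + e * (exp (L * t) * (L * 1))) (at t)"
        using dx'[of t] t atI[OF t] by (auto intro!: derivative_eq_intros)
      moreover have "(kON * r t + kI * y t - (kOFF + C t) * x t) + e * (exp (L * t) * (L * 1)) > 0"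
      proof -
        have "kON * r t \<ge> kON * (- d)" using o2 pos by (intro mult_left_mono) (auto simp: d_def)
        moreover have "kI * y t \<ge> kI * (- d)" using o1 pos by (intro mult_left_mono) (auto simp: d_def)
        moreover have "(kOFF + C t) * x t = - ((kOFF + C t) * d)" using z unfolding d_def by (subst eq_neg_iff_add_eq_0, simp flip: distrib_left)
        moreover have "(kOFF + C t) * d \<ge> 0" using Cb[of t] cmin pos d by simp
        moreover have "e * (exp (L * t) * (L * 1)) = L * d" by (simp add: d_def)
        moreover have "L * d = (kON + kI) * d + (kOFF + beta_m2A + 1) * d" by (simp add: L_def algebra_simps)
        moreover have "(kOFF + beta_m2A + 1) * d > 0" using pos d by simp
        ultimately show ?thesis by (simp add: algebra_simps)
      qed
      ultimately show "\<exists>D>0. ((\<lambda>t. x t + e * exp (L * t)) has_real_derivative D) (at t)" by blast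
    next
      fix t :: real assume t: "t > 0" and z: "y t + e * exp (L * t) = 0"
        and o1: "x t + e * exp (L * t) \<ge> 0" and o2: "r t + e * exp (L * t) \<ge> 0"
      define d where "d = e * exp (L * t)"
      have d: "d > 0" using e unfolding d_def by simp
      have "((\<lambda>t. y t + e * exp (L * t)) has_real_derivative
          (C t * x t - kI * y t) + e * (exp (L * t) * (L * 1))) (at t)"
        using dy'[of t] t atI[OF t] by (auto intro!: derivative_eq_intros)
      moreover have "(C t * x t - kI * y t) + e * (exp (L * t) * (L * 1)) > 0"
      proof -
        have "C t * x t \<ge> C t * (- d)" using o1 Cb[of t] cmin by (intro mult_left_mono) (auto simp: d_def)
        moreover have "C t * d \<le> beta_m2A * d" using Cb[of t] d by (intro mult_right_mono) auto
        moreover have "kI * y t = - (kI * d)" using z unfolding d_def by (subst eq_neg_iff_add_eq_0, simp flip: distrib_left)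
        moreover have "e * (exp (L * t) * (L * 1)) = L * d" by (simp add: d_def)
        moreover have "L * d = (kON + kI + kOFF + 1) * d + beta_m2A * d" by (simp add: L_def algebra_simps)
        moreover have "(kON + kI + kOFF + 1) * d > 0" using pos d by simp
        moreover have "kI * d > 0" using pos d by simp
        ultimately show ?thesis by (simp add: algebra_simps)
      qed
      ultimately show "\<exists>D>0. ((\<lambda>t. y t + e * exp (L * t)) has_real_derivative D) (at t)" by blast
    next
      fix t :: real assume t: "t > 0" and z: "r t + e * exp (L * t) = 0"
        and o1: "x t + e * exp (L * t) \<ge> 0" and o2: "y t + e * exp (L * t) \<ge> 0"
      define d where "d = e * exp (L * t)"
      have d: "d > 0" using e unfolding d_def by simp
      have "((\<lambda>t. r t + e * exp (L * t)) has_real_derivative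
          (kOFF * x t - kON * r t) + e * (exp (L * t) * (L * 1))) (at t)"
        using dr'[of t] t atI[OF t] by (auto intro!: derivative_eq_intros)
      moreover have "(kOFF * x t - kON * r t) + e * (exp (L * t) * (L * 1)) > 0"
      proof -
        have "kOFF * x t \<ge> kOFF * (- d)" using o1 pos by (intro mult_left_mono) (auto simp: d_def)
        moreover have "kON * r t = - (kON * d)" using z unfolding d_def by (subst eq_neg_iff_add_eq_0, simp flip: distrib_left)
        moreover have "e * (exp (L * t) * (L * 1)) = L * d" by (simp add: d_def)
        moreover have "L * d = kOFF * d + (kON + kI + beta_m2A + 1) * d" by (simp add: L_def algebra_simps)
        moreover have "(kON + kI + beta_m2A + 1) * d > 0" using pos d by simp
        moreover have "kON * d > 0" using pos d by simp
        ultimately show ?thesis by (simp add: algebra_simps)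
      qed
      ultimately show "\<exists>D>0. ((\<lambda>t. r t + e * exp (L * t)) has_real_derivative D) (at t)" by blast
    qed
    thus ?thesis using t by blast
  qed
  have limit0: "q \<ge> 0" if "\<And>e. e > 0 \<Longrightarrow> q + e * exp (L * t) > 0" for q t
  proof (rule ccontr)
    assume "\<not> q \<ge> 0"
    hence "- q / (2 * exp (L * t)) > 0" by (simp add: divide_neg_pos)
    from that[OF this] have "q + (- q / (2 * exp (L * t))) * exp (L * t) > 0" .
    also have "q + (- q / (2 * exp (L * t))) * exp (L * t) = q / 2" by simp
    finally show False using \<open>\<not> q \<ge> 0\<close> by simp
  qed
  have nn: "x t \<ge> 0 \<and> y t \<ge> 0 \<and> r t \<ge> 0" if "t \<ge> 0" for t
    using limit0[of "x t" t] limit0[of "y t" t] limit0[of "r t" t] epsinv[OF _ that] by blast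
  define A where "A = min kON kI"
  define B where "B = A + kOFF + beta_m2A"
  have A: "A > 0" using pos unfolding A_def by simp
  have B: "B > 0" using A pos unfolding B_def by simp
  have evx: "eventually (\<lambda>t. x t \<ge> A / (2 * B)) at_top"
  proof (rule lowerbd[OF B A order_refl dx'])
    fix t :: real assume t: "0 \<le> t"
    have "kON * r t \<ge> A * r t" using nn[OF t] unfolding A_def by (intro mult_right_mono) auto
    moreover have "kI * y t \<ge> A * y t" using nn[OF t] unfolding A_def by (intro mult_right_mono) auto
    moreover have "C t * x t \<le> beta_m2A * x t" using nn[OF t] Cb[of t] by (intro mult_right_mono) auto
    moreover have "A * r t + A * y t = A - A * x t" by (simp add: r_def algebra_simps)
    ultimately show "A - B * x t \<le> kON * r t + kI * y t - (kOFF + C t) * x t"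
      by (simp add: B_def algebra_simps)
  qed simp
  define mx where "mx = A / (2 * B)"
  have mx: "mx > 0" using A B unfolding mx_def by simp
  from evx obtain T0 where T0: "\<And>t. t \<ge> T0 \<Longrightarrow> x t \<ge> mx" unfolding eventually_at_top_linorder mx_def by blast
  define T where "T = max T0 0"
  have evy: "eventually (\<lambda>t. y t \<ge> (cmin * mx) / (2 * kI)) at_top"
  proof (rule lowerbd[where T = T, OF pos(3) _ _ dy'])
    show "cmin * mx > 0" using cmin mx by simp
    show "T \<ge> 0" unfolding T_def by simp
  next
    fix t :: real assume t: "T \<le> t"
    hence "x t \<ge> mx" "t \<ge> 0" using T0 unfolding T_def by auto
    hence "C t * x t \<ge> cmin * mx" using Cb[of t] cmin mx by (intro mult_mono) auto
    thus "cmin * mx - kI * y t \<le> C t * x t - kI * y t" by simp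
  qed (simp add: T_def)
  define my where "my = (cmin * mx) / (2 * kI)"
  have my: "my > 0" using cmin mx pos unfolding my_def by simp
  have lim: "ereal m \<le> Liminf at_top (\<lambda>t. ereal (f t))" if "eventually (\<lambda>t. f t \<ge> m) at_top" for m f
    unfolding le_Liminf_iff
  proof (intro allI impI)
    fix q assume "q < ereal m"
    show "eventually (\<lambda>t. q < ereal (f t)) at_top"
      using that
    proof (rule eventually_mono)
      fix t assume "m \<le> f t"
      hence "ereal m \<le> ereal (f t)" by simp
      thus "q < ereal (f t)" using \<open>q < ereal m\<close> by (rule less_le_trans[rotated])
    qed
  qed
  show ?thesis
    using lim[OF evx] lim[OF evy] mx my unfolding mx_def my_def by blast
qed
end
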